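(* Let $R$ be an almost Dedekind domain and let $I$ be a nonzero integral ideal of $R$. The following are equivalent: (i) $\nu_I$ is continuous on $\mathcal{M}$; (ii) $I=J_1\cdots J_k$ for some continuous radical ideals $J_1\subseteq\cdots\subseteq J_k$; (iii) $I=J_1\cdots J_k$ for some continuous radical ideals $J_1,\ldots,J_k$.
   Context: $R$ almost Dedekind: $R_M$ is a DVR with valuation $v_M$ for every maximal $M$. $\mathcal{M}$ is $\mathrm{Max}(R)$ with the inverse topology (restriction of the coarsest topology on $\mathrm{Spec}(R)$ in which every Zariski-open Zariski-compact set is closed). For a nonzero fractional ideal $I$, $\nu_I:\mathcal{M}\to\mathbb{Z}$, $\nu_I(M)=\inf\{v_M(i)\mid i\in I\setminus\{0\}\}$; $\mathbb{Z}$ has the discrete topology; an ideal $J$ is continuous if $\nu_J$ is continuous. *)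

theory Defs
  imports "HOL-Analysis.Analysis" "HOL-Computational_Algebra.Fraction_Field"
begin

text \<open>The domain R is the whole carrier of a type of class idom.\<close>

definition is_ideal :: "'a::idom set \<Rightarrow> bool" where
  "is_ideal I \<longleftrightarrow> 0 \<in> I \<and> (\<forall>a\<in>I. \<forall>b\<in>I. a + b \<in> I) \<and> (\<forall>r. \<forall>a\<in>I. r * a \<in> I)"

definition prime_ideal :: "'a::idom set \<Rightarrow> bool" where
  "prime_ideal P \<longleftrightarrow> is_ideal P \<and> P \<noteq> UNIV \<and> (\<forall>a b. a * b \<in> P \<longrightarrow> a \<in> P \<or> b \<in> P)"

definition maximal_ideal :: "'a::idom set \<Rightarrow> bool" where
  "maximal_ideal M \<longleftrightarrow> is_ideal M \<and> M \<noteq> UNIV \<and>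
     (\<forall>J. is_ideal J \<and> M \<subseteq> J \<longrightarrow> J = M \<or> J = UNIV)"

definition Spec :: "'a::idom set set" where
  "Spec = {P. prime_ideal P}"

definition MaxSpec :: "'a::idom set set" where
  "MaxSpec = {M. maximal_ideal M}"

definition radical_ideal :: "'a::idom set \<Rightarrow> bool" where
  "radical_ideal J \<longleftrightarrow> is_ideal J \<and> (\<forall>x n. x ^ n \<in> J \<longrightarrow> x \<in> J)"

definition ideal_gen :: "'a::idom set \<Rightarrow> 'a set" where
  "ideal_gen S = \<Inter>{J. is_ideal J \<and> S \<subseteq> J}"

definition ideal_prod :: "'a::idom set \<Rightarrow> 'a set \<Rightarrow> 'a set" where
  "ideal_prod A B = ideal_gen {a * b | a b. a \<in> A \<and> b \<in> B}"

definition ideal_prod_list :: "'a::idom set list \<Rightarrow> 'a set" where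
  "ideal_prod_list Js = foldr ideal_prod Js UNIV"

definition zariski :: "'a::idom set topology" where
  "zariski = topology_generated_by {{P \<in> Spec. f \<notin> P} | f. True}"

text \<open>Inverse topology: coarsest topology in which every Zariski-open Zariski-compact
  subset of Spec(R) is closed, i.e. generated by the complements of such sets.\<close>
definition inverse_topology :: "'a::idom set topology" where
  "inverse_topology = topology_generated_by
     {Spec - U | U. openin zariski U \<and> compactin zariski U}"

definition Max_inverse :: "'a::idom set topology" where
  "Max_inverse = subtopology inverse_topology MaxSpec"

definition localization :: "'a::idom set \<Rightarrow> 'a fract set" where
  "localization M = {Fract a b | a b. b \<notin> M}"

definition discrete_valuation :: "('a::idom fract \<Rightarrow> int) \<Rightarrow> bool" where
  "discrete_valuation v \<longleftrightarrow>
     (\<forall>x y. x \<noteq> 0 \<longrightarrow> y \<noteq> 0 \<longrightarrow> v (x * y) = v x + v y) \<and>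
     (\<forall>x y. x \<noteq> 0 \<longrightarrow> y \<noteq> 0 \<longrightarrow> x + y \<noteq> 0 \<longrightarrow> min (v x) (v y) \<le> v (x + y)) \<and>
     v ` (UNIV - {0}) = UNIV"

definition DVR_with_valuation :: "'a::idom fract set \<Rightarrow> ('a fract \<Rightarrow> int) \<Rightarrow> bool" where
  "DVR_with_valuation S v \<longleftrightarrow> discrete_valuation v \<and> S = insert 0 {x. x \<noteq> 0 \<and> 0 \<le> v x}"

definition almost_Dedekind :: "'a::idom itself \<Rightarrow> bool" where
  "almost_Dedekind _ \<longleftrightarrow>
     (\<forall>M::'a set. maximal_ideal M \<longrightarrow> (\<exists>v. DVR_with_valuation (localization M) v))"

definition val :: "'a::idom set \<Rightarrow> 'a fract \<Rightarrow> int" where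
  "val M = (SOME v. DVR_with_valuation (localization M) v)"

definition nu :: "'a::idom set \<Rightarrow> 'a set \<Rightarrow> int" where
  "nu I M = Inf {val M (Fract i 1) | i. i \<in> I \<and> i \<noteq> 0}"

definition continuous_ideal :: "'a::idom set \<Rightarrow> bool" where
  "continuous_ideal J \<longleftrightarrow>
     continuous_map Max_inverse (discrete_topology (UNIV :: int set)) (nu J)"

end

theory Submission
  imports Defs
begin

lemma ideal_0: "is_ideal I \<Longrightarrow> 0 \<in> I" by (simp add: is_ideal_def)
lemma ideal_add: "is_ideal I \<Longrightarrow> a \<in> I \<Longrightarrow> b \<in> I \<Longrightarrow> a + b \<in> I" by (simp add: is_ideal_def)
lemma ideal_lmult: "is_ideal I \<Longrightarrow> a \<in> I \<Longrightarrow> r * a \<in> I" by (simp add: is_ideal_def)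
lemma ideal_rmult: "is_ideal I \<Longrightarrow> a \<in> I \<Longrightarrow> a * r \<in> I" by (metis ideal_lmult mult.commute)
lemma ideal_neg: "is_ideal I \<Longrightarrow> a \<in> I \<Longrightarrow> - a \<in> I" by (metis ideal_lmult mult_minus1)
lemma ideal_one: "is_ideal I \<Longrightarrow> 1 \<in> I \<Longrightarrow> I = UNIV" by (metis UNIV_eq_I ideal_rmult mult_1)

lemma is_ideal_UNIV: "is_ideal (UNIV :: 'a::idom set)" by (simp add: is_ideal_def)

lemma maximal_prime:
  assumes "maximal_ideal M" shows "prime_ideal M"
proof -
  have iM: "is_ideal M" and nU: "M \<noteq> UNIV" using assms by (auto simp: maximal_ideal_def)
  { fix a b assume ab: "a * b \<in> M" and a: "a \<notin> M"
    define J where "J = {m + r * a | m r. m \<in> M}"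
    have iJ: "is_ideal J" unfolding is_ideal_def J_def
    proof (intro conjI ballI allI)
      show "0 \<in> {m + r * a |m r. m \<in> M}" using ideal_0[OF iM] by force
    next
      fix x y assume "x \<in> {m + r * a |m r. m \<in> M}" "y \<in> {m + r * a |m r. m \<in> M}"
      then obtain m1 r1 m2 r2 where "x = m1 + r1 * a" "y = m2 + r2 * a" "m1 \<in> M" "m2 \<in> M" by auto
      then show "x + y \<in> {m + r * a |m r. m \<in> M}"
        by (intro CollectI exI[of _ "m1 + m2"] exI[of _ "r1 + r2"]) (auto simp: algebra_simps ideal_add[OF iM])
    next
      fix s x assume "x \<in> {m + r * a |m r. m \<in> M}"
      then obtain m1 r1 where "x = m1 + r1 * a" "m1 \<in> M" by auto
      moreover have "s * x = s * m1 + (s * r1) * a" using \<open>x = m1 + r1 * a\<close> by (simp add: algebra_simps)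
      ultimately show "s * x \<in> {m + r * a |m r. m \<in> M}" using ideal_lmult[OF iM] by blast
    qed
    have "M \<subseteq> J" unfolding J_def by force
    moreover have "a \<in> J" unfolding J_def using ideal_0[OF iM] by force
    ultimately have "J = UNIV" using assms iJ a unfolding maximal_ideal_def by blast
    then obtain m r where "1 = m + r * a" "m \<in> M" unfolding J_def by blast
    then have "b = b * m + r * (a * b)" by (metis mult.commute distrib_left mult.left_commute mult_1_right)
    also have "\<dots> \<in> M" using ideal_add[OF iM ideal_lmult[OF iM \<open>m \<in> M\<close>, of b] ideal_lmult[OF iM ab, of r]] .
    finally have "b \<in> M" .
  }
  then show ?thesis using iM nU unfolding prime_ideal_def by blast
qed

lemma prime_1: "prime_ideal P \<Longrightarrow> 1 \<notin> P"
  unfolding prime_ideal_def using ideal_one by blast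

lemma prime_mult: "prime_ideal P \<Longrightarrow> a * b \<in> P \<Longrightarrow> a \<in> P \<or> b \<in> P"
  unfolding prime_ideal_def by blast

lemma prime_pow: "prime_ideal P \<Longrightarrow> x ^ n \<in> P \<Longrightarrow> x \<in> P"
proof (induction n)
  case 0 then show ?case using prime_1 by fastforce
next
  case (Suc n) then show ?case using prime_mult[of P x "x^n"] by auto
qed

lemma prime_prod_notin:
  assumes P: "prime_ideal P" and fin: "finite F" and bF: "\<And>f. f \<in> F \<Longrightarrow> b f \<notin> P" shows "prod b F \<notin> P"
  using fin bF
proof (induction F rule: finite_induct)
  case empty then show ?case using prime_1 P by auto
next
  case (insert x F) then show ?case using prime_mult[OF P, of "b x" "prod b F"] by auto
qed

lemma krull:
  fixes C :: "'a::idom set"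
  assumes "is_ideal C" "C \<noteq> UNIV" shows "\<exists>M. maximal_ideal M \<and> C \<subseteq> M"
proof -
  define A where "A = {J. is_ideal J \<and> C \<subseteq> J \<and> (1::'a) \<notin> J}"
  have "C \<in> A" using assms ideal_one unfolding A_def by blast
  have "\<exists>M\<in>A. \<forall>X\<in>A. M \<subseteq> X \<longrightarrow> X = M"
  proof (rule subset_Zorn_nonempty)
    show "A \<noteq> {}" using \<open>C \<in> A\<close> by blast
  next
    fix Ch assume ne: "Ch \<noteq> {}" and ch: "subset.chain A Ch"
    then have sub: "Ch \<subseteq> A" and cmp: "\<forall>X\<in>Ch. \<forall>Y\<in>Ch. X \<subseteq> Y \<or> Y \<subseteq> X" by (auto simp: subset_chain_def)
    have "is_ideal (\<Union>Ch)" unfolding is_ideal_def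
    proof (intro conjI ballI allI)
      show "0 \<in> \<Union>Ch" using ne sub unfolding A_def by (auto simp: is_ideal_def)
    next
      fix a b assume "a \<in> \<Union>Ch" "b \<in> \<Union>Ch"
      then obtain X Y where "X \<in> Ch" "Y \<in> Ch" "a \<in> X" "b \<in> Y" by auto
      then show "a + b \<in> \<Union>Ch" using cmp sub unfolding A_def
        by (metis (no_types, lifting) UnionI ideal_add mem_Collect_eq subsetD)
    next
      fix r a assume "a \<in> \<Union>Ch"
      then obtain X where "X \<in> Ch" "a \<in> X" by auto
      then have "r * a \<in> X" using sub unfolding A_def by (auto intro: ideal_lmult)
      then show "r * a \<in> \<Union>Ch" using \<open>X \<in> Ch\<close> by auto
    qed
    then show "\<Union>Ch \<in> A" using ne sub unfolding A_def by auto
  qed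
  then obtain M where MA: "M \<in> A" and mx: "\<forall>X\<in>A. M \<subseteq> X \<longrightarrow> X = M" by blast
  have "maximal_ideal M" unfolding maximal_ideal_def
  proof (intro conjI allI impI)
    show "is_ideal M" "M \<noteq> UNIV" using MA unfolding A_def by auto
  next
    fix J assume "is_ideal J \<and> M \<subseteq> J"
    then show "J = M \<or> J = UNIV" using mx MA unfolding A_def by (metis (mono_tags, lifting) ideal_one mem_Collect_eq subset_trans)
  qed
  then show ?thesis using MA unfolding A_def by blast
qed

lemma ideal_gen_ideal: "is_ideal (ideal_gen S)"
  unfolding ideal_gen_def is_ideal_def by auto
lemma ideal_gen_sub: "S \<subseteq> ideal_gen S" unfolding ideal_gen_def by auto
lemma ideal_gen_least: "is_ideal K \<Longrightarrow> S \<subseteq> K \<Longrightarrow> ideal_gen S \<subseteq> K" unfolding ideal_gen_def by auto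

lemma fract1_eq0: "Fract (a::'a::idom) 1 = 0 \<longleftrightarrow> a = 0"
  by (simp add: Zero_fract_def eq_fract)

lemma fract1_mult: "Fract (a::'a::idom) 1 * Fract b 1 = Fract (a * b) 1"
  by simp

locale adm =
  fixes M :: "'a::idom set"
  assumes AD: "almost_Dedekind TYPE('a)" and mx: "maximal_ideal M"
begin

lemma dvr: "DVR_with_valuation (localization M) (val M)"
proof -
  obtain v where "DVR_with_valuation (localization M) v" using AD mx unfolding almost_Dedekind_def by blast
  then show ?thesis unfolding val_def by (metis someI)
qed

lemma dv: "discrete_valuation (val M)" and loc: "localization M = insert 0 {x. x \<noteq> 0 \<and> 0 \<le> val M x}"
  using dvr unfolding DVR_with_valuation_def by auto

lemma vmult: "x \<noteq> 0 \<Longrightarrow> y \<noteq> 0 \<Longrightarrow> val M (x * y) = val M x + val M y"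
  using dv unfolding discrete_valuation_def by blast

lemma vadd: "x \<noteq> 0 \<Longrightarrow> y \<noteq> 0 \<Longrightarrow> x + y \<noteq> 0 \<Longrightarrow> min (val M x) (val M y) \<le> val M (x + y)"
  using dv unfolding discrete_valuation_def by blast

lemma vsurj: "\<exists>w. w \<noteq> 0 \<and> val M w = k"
  using dv unfolding discrete_valuation_def by (metis DiffE UNIV_I imageE singletonI)

lemma v1: "val M 1 = 0"
  using vmult[of 1 1] by simp

lemma iM: "is_ideal M" and pM: "prime_ideal M" and one_notin: "(1::'a) \<notin> M"
  using mx maximal_prime prime_1 unfolding maximal_ideal_def by blast+

lemma zero_in: "(0::'a) \<in> M" using iM ideal_0 by blast

lemma loc_mem: "b \<notin> M \<Longrightarrow> Fract a b \<in> localization M"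
  unfolding localization_def by blast

lemma loc_nonneg: "w \<in> localization M \<Longrightarrow> w \<noteq> 0 \<Longrightarrow> 0 \<le> val M w"
  using loc by auto

lemma nonneg_loc: "w \<noteq> 0 \<Longrightarrow> 0 \<le> val M w \<Longrightarrow> w \<in> localization M"
  using loc by auto

lemma vnonneg: "a \<noteq> 0 \<Longrightarrow> 0 \<le> val M (Fract a 1)"
  using loc_nonneg[OF loc_mem[OF one_notin]] fract1_eq0 by blast

lemma fract_self: "b \<noteq> 0 \<Longrightarrow> Fract (b::'a) b = 1"
  by (simp add: One_fract_def eq_fract)

lemma vunit: assumes "b \<notin> M" shows "val M (Fract b 1) = 0"
proof -
  have b0: "b \<noteq> 0" using assms zero_in by auto
  have w: "Fract 1 b \<in> localization M" using loc_mem[OF assms] .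
  have w0: "Fract 1 b \<noteq> 0" using b0 by (simp add: Zero_fract_def eq_fract)
  have "Fract b 1 * Fract 1 b = 1" using b0 fract_self by simp
  then have "val M (Fract b 1) + val M (Fract 1 b) = 0"
  proof -
    have "Fract b 1 \<noteq> 0" using b0 fract1_eq0 by blast
    then have "val M (Fract b 1 * Fract 1 b) = val M (Fract b 1) + val M (Fract 1 b)" using vmult w0 by blast
    then show ?thesis using \<open>Fract b 1 * Fract 1 b = 1\<close> v1 by simp
  qed
  moreover have "0 \<le> val M (Fract 1 b)" using loc_nonneg[OF w w0] .
  moreover have "0 \<le> val M (Fract b 1)" using vnonneg[OF b0] .
  ultimately show ?thesis by linarith
qed

lemma vpos: assumes a0: "a \<noteq> 0" and aM: "a \<in> M" shows "1 \<le> val M (Fract a 1)"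
proof (rule ccontr)
  assume "\<not> 1 \<le> val M (Fract a 1)"
  then have va: "val M (Fract a 1) = 0" using vnonneg[OF a0] by linarith
  have w0: "Fract 1 a \<noteq> 0" using a0 by (simp add: Zero_fract_def eq_fract)
  have "Fract a 1 * Fract 1 a = 1" using a0 fract_self by simp
  then have "val M (Fract a 1) + val M (Fract 1 a) = 0"
  proof -
    have "Fract a 1 \<noteq> 0" using a0 fract1_eq0 by blast
    then have "val M (Fract a 1 * Fract 1 a) = val M (Fract a 1) + val M (Fract 1 a)" using vmult w0 by blast
    then show ?thesis using \<open>Fract a 1 * Fract 1 a = 1\<close> v1 by simp
  qed
  then have "0 \<le> val M (Fract 1 a)" using va by linarith
  then have "Fract 1 a \<in> localization M" using nonneg_loc w0 by blast
  then obtain c d where cd: "Fract 1 a = Fract c d" "d \<notin> M" unfolding localization_def by blast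
  have "d \<noteq> 0" using cd(2) zero_in by auto
  then have "1 * d = c * a" using cd(1) a0 eq_fract(1) by blast
  then have "d \<in> M" using ideal_lmult[OF iM aM, of c] by simp
  then show False using cd(2) by blast
qed

lemma vmem: "a \<noteq> 0 \<Longrightarrow> a \<in> M \<longleftrightarrow> 1 \<le> val M (Fract a 1)"
proof
  assume "a \<noteq> 0" "a \<in> M" then show "1 \<le> val M (Fract a 1)" by (rule vpos)
next
  assume "1 \<le> val M (Fract a 1)"
  then show "a \<in> M" using vunit[of a] by fastforce
qed

lemma vdiv:
  assumes x0: "x \<noteq> 0" and z0: "z \<noteq> 0" and le: "val M (Fract x 1) \<le> val M (Fract z 1)"
  shows "\<exists>a b. b \<notin> M \<and> z * b = x * a"
proof -
  have w0: "Fract z x \<noteq> 0" using x0 z0 by (simp add: Zero_fract_def eq_fract)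
  have "Fract z x * Fract x 1 = Fract z 1" using x0 by (simp add: eq_fract)
  then have "val M (Fract z x) + val M (Fract x 1) = val M (Fract z 1)"
  proof -
    have "Fract x 1 \<noteq> 0" using x0 fract1_eq0 by blast
    then have "val M (Fract z x * Fract x 1) = val M (Fract z x) + val M (Fract x 1)" using vmult w0 by blast
    then show ?thesis using \<open>Fract z x * Fract x 1 = Fract z 1\<close> by simp
  qed
  then have "0 \<le> val M (Fract z x)" using le by linarith
  then have "Fract z x \<in> localization M" using nonneg_loc w0 by blast
  then obtain a b where ab: "Fract z x = Fract a b" "b \<notin> M" unfolding localization_def by blast
  have "b \<noteq> 0" using ab(2) zero_in by auto
  then have "z * b = a * x" using ab(1) x0 eq_fract(1) by blast
  then show ?thesis using ab(2) by (metis mult.commute)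
qed

lemma vpow: "a \<noteq> 0 \<Longrightarrow> val M (Fract (a ^ n) 1) = int n * val M (Fract a 1)"
proof (induction n)
  case 0
  have f1: "Fract (1::'a) 1 = 1" by (rule fract_self) (rule one_neq_zero)
  show ?case by (simp only: power_0 of_nat_0 mult_zero_left f1 v1)
next
  case (Suc n)
  have "\<And>y::int. y + int n * y = int (Suc n) * y" by (simp add: algebra_simps)
  have e: "Fract (a ^ Suc n) 1 = Fract a 1 * Fract (a ^ n) 1" by (simp only: power_Suc fract1_mult)
  have nz: "Fract a 1 \<noteq> 0" "Fract (a ^ n) 1 \<noteq> 0" using Suc.prems fract1_eq0 power_not_zero by metis+
  have "val M (Fract (a ^ Suc n) 1) = val M (Fract a 1) + val M (Fract (a ^ n) 1)"
    unfolding e by (rule vmult[OF nz])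
  also have "\<dots> = val M (Fract a 1) + int n * val M (Fract a 1)" by (simp only: Suc.IH[OF Suc.prems])
  also have "\<dots> = int (Suc n) * val M (Fract a 1)"
    using \<open>\<And>y::int. y + int n * y = int (Suc n) * y\<close> .
  finally show ?case .
qed

lemma unif: "\<exists>p. p \<noteq> 0 \<and> val M (Fract p 1) = 1"
proof -
  obtain w where w: "w \<noteq> 0" "val M w = 1" using vsurj by blast
  then have "w \<in> localization M" using nonneg_loc by auto
  then obtain a b where ab: "w = Fract a b" "b \<notin> M" unfolding localization_def by blast
  have b0: "b \<noteq> 0" using ab(2) zero_in by auto
  have a0: "a \<noteq> 0"
  proof
    assume "a = 0"
    then have "w = Fract 0 1" using ab(1) eq_fract(3) by simp
    then show False using w(1) by (simp add: Zero_fract_def[symmetric])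
  qed
  have "Fract a b * Fract b 1 = Fract a 1" using b0 by (simp add: eq_fract)
  then have "val M (Fract a 1) = val M w + val M (Fract b 1)"
  proof -
    have "Fract b 1 \<noteq> 0" using b0 fract1_eq0 by blast
    then have "val M (w * Fract b 1) = val M w + val M (Fract b 1)" using vmult w(1) by blast
    then show ?thesis using \<open>Fract a b * Fract b 1 = Fract a 1\<close> ab(1) by simp
  qed
  then show ?thesis using w(2) vunit[OF ab(2)] a0 by auto
qed

lemma nu_props:
  assumes I: "is_ideal I" "I \<noteq> {0}"
  shows "(\<exists>i\<in>I. i \<noteq> 0 \<and> val M (Fract i 1) = nu I M) \<and> (\<forall>i\<in>I. i \<noteq> 0 \<longrightarrow> nu I M \<le> val M (Fract i 1)) \<and> 0 \<le> nu I M"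
proof -
  define S where "S = {val M (Fract i 1) | i. i \<in> I \<and> i \<noteq> 0}"
  obtain i0 where i0: "i0 \<in> I" "i0 \<noteq> 0" using I ideal_0 by blast
  have Snn: "\<And>s. s \<in> S \<Longrightarrow> 0 \<le> s" unfolding S_def using vnonneg by auto
  have ex: "\<exists>n::nat. int n \<in> S"
    using i0 vnonneg[OF i0(2)] unfolding S_def by (intro exI[of _ "nat (val M (Fract i0 1))"]) auto
  define n where "n = (LEAST n::nat. int n \<in> S)"
  have nS: "int n \<in> S" unfolding n_def using LeastI_ex[OF ex] .
  have nle: "\<And>s. s \<in> S \<Longrightarrow> int n \<le> s"
  proof -
    fix s assume "s \<in> S"
    then have "int (nat s) \<in> S" using Snn by auto
    then have "n \<le> nat s" unfolding n_def by (rule Least_le)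
    then show "int n \<le> s" using Snn[OF \<open>s \<in> S\<close>] by linarith
  qed
  have "Inf S = int n" by (rule cInf_eq_minimum[OF nS nle])
  then have nu: "nu I M = int n" unfolding nu_def S_def by simp
  show ?thesis using nS nle unfolding nu S_def by auto
qed

lemma nu_div:
  assumes I: "is_ideal I" "I \<noteq> {0}" and z: "z = 0 \<or> nu I M \<le> val M (Fract z 1)"
  shows "\<exists>b. b \<notin> M \<and> z * b \<in> I"
proof (cases "z = 0")
  case True then show ?thesis using one_notin ideal_0[OF I(1)] by auto
next
  case False
  obtain i where i: "i \<in> I" "i \<noteq> 0" "val M (Fract i 1) = nu I M" using nu_props[OF I] by blast
  obtain a b where "b \<notin> M" "z * b = i * a" using vdiv[OF i(2) False] z i(3) False by auto
  then show ?thesis using ideal_rmult[OF I(1) i(1)] by metis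
qed

end

lemma fract_add1: "Fract (a::'a::idom) 1 + Fract b 1 = Fract (a + b) 1"
  by simp

lemma prod_ideal: "is_ideal (ideal_prod A B)"
  unfolding ideal_prod_def by (rule ideal_gen_ideal)

lemma prod_mem: "a \<in> A \<Longrightarrow> b \<in> B \<Longrightarrow> a * b \<in> ideal_prod A B"
proof -
  assume "a \<in> A" "b \<in> B"
  then have "a * b \<in> {x * y | x y. x \<in> A \<and> y \<in> B}" by blast
  then show ?thesis unfolding ideal_prod_def by (rule subsetD[OF ideal_gen_sub])
qed

lemma prod_nz:
  assumes "is_ideal A" "A \<noteq> {0}" "is_ideal B" "B \<noteq> {0}" shows "ideal_prod A B \<noteq> {(0::'a::idom)}"
proof -
  obtain a where "a \<in> A" "a \<noteq> 0" using assms(1,2) ideal_0 by blast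
  obtain b where "b \<in> B" "b \<noteq> 0" using assms(3,4) ideal_0 by blast
  have "a * b \<in> ideal_prod A B" using prod_mem \<open>a \<in> A\<close> \<open>b \<in> B\<close> by blast
  moreover have "a * b \<noteq> 0" using \<open>a \<noteq> 0\<close> \<open>b \<noteq> 0\<close> by simp
  ultimately show ?thesis by blast
qed

lemma prod_list_ideal: "is_ideal (ideal_prod_list Js)"
proof (cases Js)
  case Nil then show ?thesis by (simp add: ideal_prod_list_def is_ideal_UNIV)
next
  case (Cons J Js') then show ?thesis by (simp add: ideal_prod_list_def prod_ideal)
qed

lemma prod_list_nz: "(\<forall>J\<in>set Js. is_ideal J \<and> J \<noteq> {0}) \<Longrightarrow> ideal_prod_list Js \<noteq> {(0::'a::idom)}"
proof (induction Js)
  case Nil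
  have "(UNIV::'a set) \<noteq> {0}" by (metis UNIV_I singletonD zero_neq_one)
  then show ?case by (simp add: ideal_prod_list_def)
next
  case (Cons J Js)
  have "ideal_prod_list (J # Js) = ideal_prod J (ideal_prod_list Js)" by (simp add: ideal_prod_list_def)
  have "is_ideal J" "J \<noteq> {0}" using Cons.prems by simp_all
  moreover have "\<forall>J\<in>set Js. is_ideal J \<and> J \<noteq> {0}" using Cons.prems by simp
  then have "ideal_prod_list Js \<noteq> {0}" by (rule Cons.IH)
  ultimately have "ideal_prod J (ideal_prod_list Js) \<noteq> {0}" using prod_nz prod_list_ideal by blast
  then show ?case using \<open>ideal_prod_list (J # Js) = _\<close> by simp
qed

context adm begin

lemma nu_le: "is_ideal I \<Longrightarrow> I \<noteq> {0} \<Longrightarrow> i \<in> I \<Longrightarrow> i \<noteq> 0 \<Longrightarrow> nu I M \<le> val M (Fract i 1)"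
  using nu_props[of I] by blast

lemma nu_nonneg: "is_ideal I \<Longrightarrow> I \<noteq> {0} \<Longrightarrow> 0 \<le> nu I M"
  using nu_props[of I] by blast

lemma nu_attain:
  assumes "is_ideal I" "I \<noteq> {0}"
  obtains i where "i \<in> I" "i \<noteq> 0" "val M (Fract i 1) = nu I M"
  using nu_props[OF assms] by blast

lemma nu_UNIV: "nu UNIV M = 0"
proof -
  have "(UNIV::'a set) \<noteq> {0}" by (metis UNIV_I singletonD zero_neq_one)
  note P = nu_props[OF is_ideal_UNIV this]
  have f1: "Fract (1::'a) 1 = 1" by (rule fract_self) (rule one_neq_zero)
  have "\<forall>i\<in>UNIV. i \<noteq> 0 \<longrightarrow> nu UNIV M \<le> val M (Fract i 1)" using P by (rule conjunct1[OF conjunct2])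
  then have "nu UNIV M \<le> val M (Fract 1 1)" by simp
  then have "nu UNIV M \<le> 0" by (simp only: f1 v1)
  moreover have "0 \<le> nu UNIV M" using P by (rule conjunct2[OF conjunct2])
  ultimately show ?thesis by simp
qed

lemma nu_prod:
  assumes A: "is_ideal A" "A \<noteq> {0}" and B: "is_ideal B" "B \<noteq> {0}"
  shows "nu (ideal_prod A B) M = nu A M + nu B M"
proof -
  define c where "c = nu A M + nu B M"
  define K where "K = {z. z = 0 \<or> c \<le> val M (Fract z 1)}"
  have iK: "is_ideal K" unfolding is_ideal_def
  proof (intro conjI ballI allI)
    show "0 \<in> K" unfolding K_def by simp
  next
    fix x y assume x: "x \<in> K" and y: "y \<in> K"
    show "x + y \<in> K"
    proof (cases "x = 0 \<or> y = 0 \<or> x + y = 0")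
      case True then show ?thesis using x y unfolding K_def by auto
    next
      case False
      then have nz: "Fract x 1 \<noteq> 0" "Fract y 1 \<noteq> 0" "Fract x 1 + Fract y 1 \<noteq> 0"
        using fract1_eq0 fract_add1 by metis+
      have "min (val M (Fract x 1)) (val M (Fract y 1)) \<le> val M (Fract x 1 + Fract y 1)"
        by (rule vadd[OF nz])
      then have "min (val M (Fract x 1)) (val M (Fract y 1)) \<le> val M (Fract (x + y) 1)"
        by (simp only: fract_add1)
      moreover have "c \<le> val M (Fract x 1)" "c \<le> val M (Fract y 1)" using x y False unfolding K_def by auto
      ultimately have "c \<le> min (val M (Fract x 1)) (val M (Fract y 1))" by simp
      then have "c \<le> val M (Fract (x + y) 1)" using \<open>min _ _ \<le> val M (Fract (x + y) 1)\<close> by (rule order_trans)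
      then show ?thesis unfolding K_def by simp
    qed
  next
    fix r x assume x: "x \<in> K"
    show "r * x \<in> K"
    proof (cases "r = 0 \<or> x = 0")
      case True then show ?thesis unfolding K_def by auto
    next
      case False
      then have nz: "Fract r 1 \<noteq> 0" "Fract x 1 \<noteq> 0" using fract1_eq0 by metis+
      have "val M (Fract r 1 * Fract x 1) = val M (Fract r 1) + val M (Fract x 1)" by (rule vmult[OF nz])
      then have "val M (Fract (r * x) 1) = val M (Fract r 1) + val M (Fract x 1)" by (simp only: fract1_mult)
      moreover have "0 \<le> val M (Fract r 1)" using vnonneg False by blast
      moreover have "c \<le> val M (Fract x 1)" using x False unfolding K_def by auto
      ultimately show ?thesis unfolding K_def by simp
    qed
  qed
  have "{a * b | a b. a \<in> A \<and> b \<in> B} \<subseteq> K"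
  proof safe
    fix a b assume ab: "a \<in> A" "b \<in> B"
    show "a * b \<in> K"
    proof (cases "a = 0 \<or> b = 0")
      case True then show ?thesis unfolding K_def by auto
    next
      case False
      then have nz: "Fract a 1 \<noteq> 0" "Fract b 1 \<noteq> 0" using fract1_eq0 by metis+
      have "val M (Fract a 1 * Fract b 1) = val M (Fract a 1) + val M (Fract b 1)" by (rule vmult[OF nz])
      then have "val M (Fract (a * b) 1) = val M (Fract a 1) + val M (Fract b 1)" by (simp only: fract1_mult)
      moreover have "nu A M \<le> val M (Fract a 1)" "nu B M \<le> val M (Fract b 1)"
        using nu_le[OF A ab(1)] nu_le[OF B ab(2)] False by simp_all
      ultimately show ?thesis unfolding K_def c_def by simp
    qed
  qed
  then have sub: "ideal_prod A B \<subseteq> K" unfolding ideal_prod_def by (rule ideal_gen_least[OF iK])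
  obtain a where a: "a \<in> A" "a \<noteq> 0" "val M (Fract a 1) = nu A M" using nu_attain[OF A] by blast
  obtain b where b: "b \<in> B" "b \<noteq> 0" "val M (Fract b 1) = nu B M" using nu_attain[OF B] by blast
  have nz: "Fract a 1 \<noteq> 0" "Fract b 1 \<noteq> 0" using fract1_eq0 a b by metis+
  have "val M (Fract a 1 * Fract b 1) = val M (Fract a 1) + val M (Fract b 1)" by (rule vmult[OF nz])
  then have vab: "val M (Fract (a * b) 1) = c" unfolding c_def using a b by (simp only: fract1_mult)
  have PN: "ideal_prod A B \<noteq> {0}" using prod_nz A B by blast
  have "a * b \<in> ideal_prod A B" using prod_mem a b by blast
  moreover have "a * b \<noteq> 0" using a b by simp
  ultimately have "nu (ideal_prod A B) M \<le> val M (Fract (a * b) 1)" by (rule nu_le[OF prod_ideal PN])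
  then have le: "nu (ideal_prod A B) M \<le> c" by (simp only: vab)
  obtain i where i: "i \<in> ideal_prod A B" "i \<noteq> 0" "val M (Fract i 1) = nu (ideal_prod A B) M" using nu_attain[OF prod_ideal PN] by blast
  have "i \<in> K" using sub i(1) by blast
  then have "c \<le> val M (Fract i 1)" using i(2) unfolding K_def by blast
  then have "c \<le> nu (ideal_prod A B) M" using i(3) by simp
  then show ?thesis using le c_def by simp
qed

lemma nu_prod_list:
  "(\<forall>J\<in>set Js. is_ideal J \<and> J \<noteq> {0}) \<Longrightarrow> nu (ideal_prod_list Js) M = sum_list (map (\<lambda>J. nu J M) Js)"
proof (induction Js)
  case Nil then show ?case using nu_UNIV by (simp add: ideal_prod_list_def)
next
  case (Cons J Js)
  have e: "ideal_prod_list (J # Js) = ideal_prod J (ideal_prod_list Js)" by (simp add: ideal_prod_list_def)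
  have "nu (ideal_prod J (ideal_prod_list Js)) M = nu J M + nu (ideal_prod_list Js) M"
    using Cons.prems prod_list_ideal prod_list_nz by (intro nu_prod) auto
  then show ?case using Cons e by simp
qed

end

lemma nu_sub:
  assumes AD: "almost_Dedekind TYPE('a::idom)"
    and I: "is_ideal I" "I \<noteq> {0}" and I': "is_ideal I'" "I' \<noteq> {(0::'a)}"
    and le: "\<And>M. maximal_ideal M \<Longrightarrow> nu I' M \<le> nu I M"
  shows "I \<subseteq> I'"
proof
  fix z assume z: "z \<in> I"
  define C where "C = {r. r * z \<in> I'}"
  have iC: "is_ideal C" unfolding C_def is_ideal_def using I'(1)
    by (auto simp: distrib_right ideal_0 ideal_add mult.assoc ideal_lmult)
  have "C = UNIV"
  proof (rule ccontr)
    assume "C \<noteq> UNIV"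
    then obtain M where M: "maximal_ideal M" "C \<subseteq> M" using krull iC by blast
    interpret adm M using AD M(1) by unfold_locales
    have "z = 0 \<or> nu I' M \<le> val M (Fract z 1)"
    proof (cases "z = 0")
      case False
      then have "nu I M \<le> val M (Fract z 1)" using nu_le[OF I z] by blast
      then show ?thesis using le[OF M(1)] by simp
    qed simp
    then obtain b where "b \<notin> M" "z * b \<in> I'" using nu_div[OF I'] by blast
    then have "b \<in> C" unfolding C_def by (simp add: mult.commute)
    then show False using M(2) \<open>b \<notin> M\<close> by blast
  qed
  then have "1 \<in> C" by simp
  then show "z \<in> I'" unfolding C_def by simp
qed

lemma ideal_eq_nu:
  assumes AD: "almost_Dedekind TYPE('a::idom)"
    and I: "is_ideal I" "I \<noteq> {0}" and I': "is_ideal I'" "I' \<noteq> {(0::'a)}"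
    and eq: "\<And>M. maximal_ideal M \<Longrightarrow> nu I M = nu I' M"
  shows "I = I'"
  using nu_sub[OF AD I I'] nu_sub[OF AD I' I] eq by (metis order_refl subset_antisym)

lemma prime_maximal:
  assumes AD: "almost_Dedekind TYPE('a::idom)"
    and P: "prime_ideal P" and p: "p \<in> P" "p \<noteq> (0::'a)"
  shows "maximal_ideal P"
proof -
  have iP: "is_ideal P" "P \<noteq> UNIV" using P unfolding prime_ideal_def by auto
  obtain M where M: "maximal_ideal M" "P \<subseteq> M" using krull[OF iP] by blast
  interpret adm M using AD M(1) by unfold_locales
  have "M \<subseteq> P"
  proof
    fix m assume m: "m \<in> M"
    show "m \<in> P"
    proof (cases "m = 0")
      case True then show ?thesis using iP ideal_0 by blast
    next
      case False
      define n where "n = nat (val M (Fract p 1))"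
      have vm: "1 \<le> val M (Fract m 1)" using vpos[OF False m] .
      have vp: "0 \<le> val M (Fract p 1)" using vnonneg[OF p(2)] .
      have "val M (Fract (m ^ n) 1) = int n * val M (Fract m 1)" using vpow[OF False] .
      moreover have "int n * 1 \<le> int n * val M (Fract m 1)" using vm by (intro mult_left_mono) auto
      ultimately have "val M (Fract p 1) \<le> val M (Fract (m ^ n) 1)" using vp unfolding n_def by simp
      then obtain a b where ab: "b \<notin> M" "m ^ n * b = p * a" using vdiv[OF p(2)] False by (meson power_not_zero)
      have "m ^ n * b \<in> P" using ab(2) ideal_rmult[OF iP(1) p(1)] by simp
      moreover have "b \<notin> P" using ab(1) M(2) by blast
      ultimately have "m ^ n \<in> P" using prime_mult[OF P] by blast
      then show ?thesis using prime_pow[OF P] by blast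
    qed
  qed
  then have "P = M" using M(2) by blast
  then show ?thesis using M(1) by simp
qed

definition Dset :: "'a::idom \<Rightarrow> 'a set set" where "Dset f = {P \<in> Spec. f \<notin> P}"

lemma zariski_gen: "{{P \<in> Spec. f \<notin> P} | f. True} = range (Dset :: 'a::idom \<Rightarrow> _)"
  unfolding Dset_def by auto

lemma Dset_open: "openin zariski (Dset g)"
  unfolding zariski_def zariski_gen by (rule topology_generated_by_Basis) simp

lemma Dset_mult: "Dset (g1 * g2) = Dset g1 \<inter> Dset (g2::'a::idom)"
proof -
  have "\<And>P::'a set. P \<in> Spec \<Longrightarrow> (g1 * g2 \<notin> P) = (g1 \<notin> P \<and> g2 \<notin> P)"
  proof -
    fix P :: "'a set" assume "P \<in> Spec"
    then have P: "prime_ideal P" unfolding Spec_def by simp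
    then have iP: "is_ideal P" unfolding prime_ideal_def by simp
    show "(g1 * g2 \<notin> P) = (g1 \<notin> P \<and> g2 \<notin> P)"
      using prime_mult[OF P, of g1 g2] ideal_rmult[OF iP, of g1 g2] ideal_lmult[OF iP, of g2 g1] by blast
  qed
  then show ?thesis unfolding Dset_def by blast
qed

lemma zariski_basic:
  assumes "openin zariski U" "P \<in> U" shows "\<exists>g. P \<in> Dset g \<and> Dset g \<subseteq> U"
proof -
  have "generate_topology_on (range Dset) U"
    using assms(1) unfolding zariski_def zariski_gen by (rule openin_topology_generated_by)
  then have "\<forall>P\<in>U. \<exists>g. P \<in> Dset g \<and> Dset g \<subseteq> U"
  proof (induction rule: generate_topology_on.induct)
    case Empty then show ?case by simp
  next
    case (Int a b)
    show ?case
    proof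
      fix P assume "P \<in> a \<inter> b"
      then obtain g1 g2 where "P \<in> Dset g1" "Dset g1 \<subseteq> a" "P \<in> Dset g2" "Dset g2 \<subseteq> b" using Int.IH by blast
      then show "\<exists>g. P \<in> Dset g \<and> Dset g \<subseteq> a \<inter> b" using Dset_mult[of g1 g2] by blast
    qed
  next
    case (UN K) then show ?case by blast
  next
    case (Basis s) then show ?case by blast
  qed
  then show ?thesis using assms(2) by blast
qed

lemma compact_open_fin:
  assumes "openin zariski U" "compactin zariski U"
  shows "\<exists>G. finite G \<and> U = \<Union>(Dset ` G)"
proof -
  define \<U> where "\<U> = Dset ` {g. Dset g \<subseteq> U}"
  have "\<forall>V\<in>\<U>. openin zariski V" unfolding \<U>_def using Dset_open by blast
  moreover have "U \<subseteq> \<Union>\<U>" unfolding \<U>_def using zariski_basic[OF assms(1)] by blast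
  ultimately obtain \<F> where F: "finite \<F>" "\<F> \<subseteq> \<U>" "U \<subseteq> \<Union>\<F>"
    using assms(2) unfolding compactin_def by meson
  then obtain G where G: "G \<subseteq> {g. Dset g \<subseteq> U}" "finite G" "\<F> = Dset ` G"
    unfolding \<U>_def using finite_subset_image[OF F(1)] by meson
  have "U = \<Union>(Dset ` G)" using G F(3) by blast
  then show ?thesis using G(2) by blast
qed

definition invgen :: "'a::idom set set set" where
  "invgen = {Spec - U | U. openin zariski U \<and> compactin zariski U}"

lemma inverse_topology_eq: "inverse_topology = topology_generated_by invgen"
  unfolding inverse_topology_def invgen_def ..

lemma MaxSpec_Spec: "MaxSpec \<subseteq> Spec"
  unfolding MaxSpec_def Spec_def using maximal_prime by blast

lemma topspace_Max: "topspace Max_inverse = MaxSpec"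
proof -
  have "openin zariski {}" "compactin zariski {}" by simp_all
  then have "Spec - {} \<in> invgen" unfolding invgen_def by blast
  then have "Spec \<in> invgen" by simp
  moreover have "\<And>X. X \<in> invgen \<Longrightarrow> X \<subseteq> Spec" unfolding invgen_def by blast
  ultimately have "\<Union>invgen = Spec" by blast
  then have "topspace inverse_topology = Spec" unfolding inverse_topology_eq by simp
  then show ?thesis unfolding Max_inverse_def using MaxSpec_Spec by auto
qed

lemma inv_open_nbhd:
  assumes "generate_topology_on invgen T"
  shows "\<forall>P\<in>T. \<exists>F. finite F \<and> F \<subseteq> P \<and> {N \<in> Spec. F \<subseteq> N} \<subseteq> T"
  using assms
proof (induction rule: generate_topology_on.induct)
  case Empty then show ?case by simp
next
  case (Int a b)
  show ?case
  proof
    fix P assume "P \<in> a \<inter> b"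
    then obtain F1 F2 where "finite F1" "F1 \<subseteq> P" "{N \<in> Spec. F1 \<subseteq> N} \<subseteq> a"
      "finite F2" "F2 \<subseteq> P" "{N \<in> Spec. F2 \<subseteq> N} \<subseteq> b" using Int.IH by (meson IntD1 IntD2)
    then show "\<exists>F. finite F \<and> F \<subseteq> P \<and> {N \<in> Spec. F \<subseteq> N} \<subseteq> a \<inter> b"
      by (intro exI[of _ "F1 \<union> F2"]) auto
  qed
next
  case (UN K)
  show ?case
  proof
    fix P assume "P \<in> \<Union>K"
    then obtain k where "k \<in> K" "P \<in> k" by blast
    then obtain F where "finite F" "F \<subseteq> P" "{N \<in> Spec. F \<subseteq> N} \<subseteq> k" using UN.IH by meson
    then show "\<exists>F. finite F \<and> F \<subseteq> P \<and> {N \<in> Spec. F \<subseteq> N} \<subseteq> \<Union>K" using \<open>k \<in> K\<close> by blast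
  qed
next
  case (Basis s)
  then obtain U where U: "s = Spec - U" "openin zariski U" "compactin zariski U" unfolding invgen_def by blast
  obtain G where G: "finite G" "U = \<Union>(Dset ` G)" using compact_open_fin[OF U(2,3)] by blast
  show ?case
  proof
    fix P assume P: "P \<in> s"
    have "G \<subseteq> P" using P U(1) G(2) unfolding Dset_def by blast
    moreover have "{N \<in> Spec. G \<subseteq> N} \<subseteq> s" using U(1) G(2) unfolding Dset_def by blast
    ultimately show "\<exists>F. finite F \<and> F \<subseteq> P \<and> {N \<in> Spec. F \<subseteq> N} \<subseteq> s" using G(1) by blast
  qed
qed

lemma max_nbhd:
  assumes "openin Max_inverse S" "M \<in> S"
  shows "\<exists>F. finite F \<and> F \<subseteq> M \<and> {N \<in> MaxSpec. F \<subseteq> N} \<subseteq> S"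
proof -
  obtain T where T: "openin inverse_topology T" "S = T \<inter> MaxSpec"
    using assms(1) unfolding Max_inverse_def openin_subtopology by blast
  have "generate_topology_on invgen T" using T(1) unfolding inverse_topology_eq
    by (rule openin_topology_generated_by)
  note G = inv_open_nbhd[OF this]
  have "M \<in> T" using assms(2) T(2) by blast
  have "\<exists>F. finite F \<and> F \<subseteq> M \<and> {N \<in> Spec. F \<subseteq> N} \<subseteq> T" using G \<open>M \<in> T\<close> by (rule bspec)
  then obtain F where F: "finite F" "F \<subseteq> M" "{N \<in> Spec. F \<subseteq> N} \<subseteq> T" by blast
  have "{N \<in> MaxSpec. F \<subseteq> N} \<subseteq> S" using F(3) T(2) MaxSpec_Spec by blast
  then show ?thesis using F(1,2) by blast
qed

lemma cont_discrete:
  "continuous_map X (discrete_topology (UNIV::int set)) f \<longleftrightarrow> (\<forall>c. openin X {x \<in> topspace X. f x = c})"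
proof
  assume "continuous_map X (discrete_topology UNIV) f"
  then have H: "\<forall>U. openin (discrete_topology (UNIV::int set)) U \<longrightarrow> openin X {x \<in> topspace X. f x \<in> U}"
    unfolding continuous_map_def by blast
  show "\<forall>c. openin X {x \<in> topspace X. f x = c}"
  proof
    fix c :: int
    have "openin (discrete_topology (UNIV::int set)) {c}" by simp
    then have "openin X {x \<in> topspace X. f x \<in> {c}}" using H by blast
    then show "openin X {x \<in> topspace X. f x = c}" by simp
  qed
next
  assume H: "\<forall>c. openin X {x \<in> topspace X. f x = c}"
  { fix U :: "int set"
    have "{x \<in> topspace X. f x \<in> U} = \<Union>((\<lambda>c. {x \<in> topspace X. f x = c}) ` U)" by auto
    moreover have "openin X (\<Union>((\<lambda>c. {x \<in> topspace X. f x = c}) ` U))" using H by blast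
    ultimately have "openin X {x \<in> topspace X. f x \<in> U}" by simp }
  then show "continuous_map X (discrete_topology UNIV) f"
    unfolding continuous_map_def by auto
qed

lemma level_open:
  assumes "continuous_ideal I"
  shows "openin Max_inverse {M \<in> MaxSpec. nu I M \<in> C}"
proof -
  have H: "\<forall>c. openin Max_inverse {M \<in> MaxSpec. nu I M = c}"
    using assms unfolding continuous_ideal_def cont_discrete topspace_Max .
  have "{M \<in> MaxSpec. nu I M \<in> C} = \<Union>((\<lambda>c. {M \<in> MaxSpec. nu I M = c}) ` C)" by auto
  moreover have "openin Max_inverse (\<Union>((\<lambda>c. {M \<in> MaxSpec. nu I M = c}) ` C))" using H by blast
  ultimately show ?thesis by simp
qed

lemma cont_add:
  assumes f: "continuous_map X (discrete_topology (UNIV::int set)) f"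
    and g: "continuous_map X (discrete_topology (UNIV::int set)) g"
  shows "continuous_map X (discrete_topology (UNIV::int set)) (\<lambda>x. f x + g x)"
proof -
  have F: "\<forall>c. openin X {x \<in> topspace X. f x = c}" and G: "\<forall>c. openin X {x \<in> topspace X. g x = c}"
    using f g unfolding cont_discrete by blast+
  { fix c :: int
    have "{x \<in> topspace X. f x + g x = c} = \<Union>((\<lambda>a. {x \<in> topspace X. f x = a} \<inter> {x \<in> topspace X. g x = c - a}) ` UNIV)"
      by auto
    moreover have "openin X (\<Union>((\<lambda>a. {x \<in> topspace X. f x = a} \<inter> {x \<in> topspace X. g x = c - a}) ` UNIV))"
      using F G by blast
    ultimately have "openin X {x \<in> topspace X. f x + g x = c}" by simp }
  then show ?thesis unfolding cont_discrete by blast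
qed

lemma cont_zero: "continuous_map X (discrete_topology (UNIV::int set)) (\<lambda>x. 0)"
  by simp

lemma cont_sum_list:
  "(\<forall>J\<in>set Js. continuous_ideal J) \<Longrightarrow>
    continuous_map Max_inverse (discrete_topology (UNIV::int set)) (\<lambda>M. sum_list (map (\<lambda>J. nu J M) Js))"
proof (induction Js)
  case Nil then show ?case by simp
next
  case (Cons J Js)
  have "continuous_map Max_inverse (discrete_topology (UNIV::int set)) (nu J)"
    using Cons.prems unfolding continuous_ideal_def by simp
  moreover have "continuous_map Max_inverse (discrete_topology (UNIV::int set)) (\<lambda>M. sum_list (map (\<lambda>J. nu J M) Js))"
    using Cons by simp
  ultimately show ?case using cont_add by simp
qed

lemma iii_i:
  assumes AD: "almost_Dedekind TYPE('a::idom)"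
    and Js: "\<forall>J\<in>set Js. is_ideal J \<and> J \<noteq> {0} \<and> radical_ideal J \<and> continuous_ideal (J::'a set)"
  shows "continuous_ideal (ideal_prod_list Js)"
proof -
  have c: "continuous_map Max_inverse (discrete_topology (UNIV::int set)) (\<lambda>M. sum_list (map (\<lambda>J. nu J M) Js))"
    using Js cont_sum_list by blast
  have "\<And>M. M \<in> topspace Max_inverse \<Longrightarrow> sum_list (map (\<lambda>J. nu J M) Js) = nu (ideal_prod_list Js) M"
  proof -
    fix M :: "'a set" assume "M \<in> topspace Max_inverse"
    then have "maximal_ideal M" unfolding topspace_Max MaxSpec_def by simp
    then interpret adm M using AD by unfold_locales
    show "sum_list (map (\<lambda>J. nu J M) Js) = nu (ideal_prod_list Js) M"
      using nu_prod_list Js by simp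
  qed
  then show ?thesis unfolding continuous_ideal_def using continuous_map_eq[OF c] by blast
qed

lemma mem_of_nu_pos:
  assumes AD: "almost_Dedekind TYPE('a::idom)" and I: "is_ideal I" "I \<noteq> {0}"
    and x: "x \<in> I" "x \<noteq> (0::'a)" and M: "M \<in> MaxSpec" and pos: "1 \<le> nu I M"
  shows "x \<in> M"
proof -
  have "maximal_ideal M" using M unfolding MaxSpec_def by simp
  then interpret adm M using AD by unfold_locales
  have "nu I M \<le> val M (Fract x 1)" by (rule nu_le[OF I x])
  then show ?thesis using vmem[OF x(2)] pos by simp
qed

lemma nu_bounded:
  assumes AD: "almost_Dedekind TYPE('a::idom)" and I: "is_ideal I" "I \<noteq> {(0::'a)}"
    and cont: "continuous_ideal I"
  shows "\<exists>K. \<forall>M\<in>MaxSpec. nu I M \<le> K"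
proof (rule ccontr)
  assume "\<not> ?thesis"
  then have "\<forall>k::nat. \<exists>M. M \<in> MaxSpec \<and> int k < nu I M" by (meson not_le)
  then obtain Ms where Ms: "\<And>k. Ms k \<in> MaxSpec" "\<And>k. int k < nu I (Ms k)" by metis
  obtain x where x: "x \<in> I" "x \<noteq> 0" using I ideal_0 by blast
  have xMs: "x \<in> Ms k" for k
  proof -
    have "1 \<le> nu I (Ms k)" using Ms(2)[of k] by linarith
    then show ?thesis using mem_of_nu_pos[OF AD I x Ms(1)] by blast
  qed
  have Msi: "is_ideal (Ms k)" "prime_ideal (Ms k)" "1 \<notin> Ms k" for k
    using Ms(1)[of k] maximal_prime prime_1 unfolding MaxSpec_def maximal_ideal_def by blast+
  define Phi where "Phi = {K. is_ideal K \<and> x \<in> K \<and> (\<forall>F. finite F \<and> F \<subseteq> K \<longrightarrow> infinite {k. F \<subseteq> Ms k})}"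
  have PhiD: "is_ideal K" "x \<in> K" "\<And>F. finite F \<Longrightarrow> F \<subseteq> K \<Longrightarrow> infinite {k. F \<subseteq> Ms k}" if "K \<in> Phi" for K
    using that unfolding Phi_def by blast+
  have PhiI: "K \<in> Phi" if "is_ideal K" "x \<in> K" "\<And>F. finite F \<Longrightarrow> F \<subseteq> K \<Longrightarrow> infinite {k. F \<subseteq> Ms k}" for K
    using that unfolding Phi_def by blast
  define X0 where "X0 = {r * x | r. True}"
  have "X0 \<in> Phi" unfolding Phi_def
  proof (intro CollectI conjI allI impI)
    show "is_ideal X0" unfolding X0_def is_ideal_def
    proof (intro conjI ballI allI)
      show "0 \<in> {r * x |r. True}" by (intro CollectI exI[of _ 0]) simp
    next
      fix a b assume "a \<in> {r * x |r. True}" "b \<in> {r * x |r. True}"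
      then obtain r s where "a = r * x" "b = s * x" by blast
      then have "a + b = (r + s) * x" by (simp add: distrib_right)
      then show "a + b \<in> {r * x |r. True}" by blast
    next
      fix t a assume "a \<in> {r * x |r. True}"
      then obtain r where "a = r * x" by blast
      then have "t * a = (t * r) * x" by (simp add: mult.assoc)
      then show "t * a \<in> {r * x |r. True}" by blast
    qed
    show "x \<in> X0" unfolding X0_def by (intro CollectI exI[of _ 1]) simp
  next
    fix F assume F: "finite F \<and> F \<subseteq> X0"
    have "\<forall>k. F \<subseteq> Ms k"
    proof
      fix k
      show "F \<subseteq> Ms k"
      proof
        fix y assume "y \<in> F"
        then obtain r where "y = r * x" using F unfolding X0_def by blast
        then show "y \<in> Ms k" using ideal_lmult[OF Msi(1) xMs] by simp
      qed
    qed
    then have "{k. F \<subseteq> Ms k} = UNIV" by blast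
    then show "infinite {k. F \<subseteq> Ms k}" by simp
  qed
  have "\<exists>P\<in>Phi. \<forall>X\<in>Phi. P \<subseteq> X \<longrightarrow> X = P"
  proof (rule subset_Zorn_nonempty)
    show "Phi \<noteq> {}" using \<open>X0 \<in> Phi\<close> by blast
  next
    fix Ch assume ne: "Ch \<noteq> {}" and ch: "subset.chain Phi Ch"
    then have sub: "Ch \<subseteq> Phi" and cmp: "\<forall>X\<in>Ch. \<forall>Y\<in>Ch. X \<subseteq> Y \<or> Y \<subseteq> X" by (auto simp: subset_chain_def)
    have iU: "is_ideal (\<Union>Ch)" unfolding is_ideal_def
    proof (intro conjI ballI allI)
      obtain X where "X \<in> Ch" using ne by blast
      then have "0 \<in> X" using sub PhiD(1) ideal_0 by blast
      then show "0 \<in> \<Union>Ch" using \<open>X \<in> Ch\<close> by blast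
    next
      fix a b assume "a \<in> \<Union>Ch" "b \<in> \<Union>Ch"
      then obtain X Y where XY: "X \<in> Ch" "Y \<in> Ch" "a \<in> X" "b \<in> Y" by auto
      have iX: "is_ideal X" "is_ideal Y" using XY sub PhiD(1) by blast+
      show "a + b \<in> \<Union>Ch"
      proof (cases "X \<subseteq> Y")
        case True then have "a + b \<in> Y" using ideal_add[OF iX(2)] XY by blast
        then show ?thesis using XY by blast
      next
        case False then have "Y \<subseteq> X" using cmp XY by blast
        then have "a + b \<in> X" using ideal_add[OF iX(1)] XY by blast
        then show ?thesis using XY by blast
      qed
    next
      fix r a assume "a \<in> \<Union>Ch"
      then obtain X where "X \<in> Ch" "a \<in> X" by auto
      then have "r * a \<in> X" using sub PhiD(1) ideal_lmult by blast
      then show "r * a \<in> \<Union>Ch" using \<open>X \<in> Ch\<close> by auto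
    qed
    obtain X where "X \<in> Ch" using ne by blast
    then have xU: "x \<in> \<Union>Ch" using sub PhiD(2) by blast
    show "\<Union>Ch \<in> Phi"
    proof (rule PhiI[OF iU xU])
      fix F assume F: "finite F" "F \<subseteq> \<Union>Ch"
      obtain B where "B \<in> Ch" "F \<subseteq> B" using finite_subset_Union_chain[OF F ne ch] by blast
      then show "infinite {k. F \<subseteq> Ms k}" using F(1) sub PhiD(3) by blast
    qed
  qed
  then obtain P where PPhi: "P \<in> Phi" and Pmax: "\<forall>X\<in>Phi. P \<subseteq> X \<longrightarrow> X = P" by blast
  note iP = PhiD(1)[OF PPhi] and xP = PhiD(2)[OF PPhi] and infP = PhiD(3)[OF PPhi]
  have oneP: "1 \<notin> P"
  proof
    assume "1 \<in> P"
    then have "infinite {k. {1} \<subseteq> Ms k}" by (intro infP) auto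
    moreover have "{k. {1} \<subseteq> Ms k} = {}" using Msi(3) by blast
    ultimately show False by simp
  qed
  have ext: "\<exists>Fp. finite Fp \<and> Fp \<subseteq> P \<and> finite {k. Fp \<subseteq> Ms k \<and> a \<in> Ms k}" if aP: "a \<notin> P" for a
  proof -
    define Pa where "Pa = {p + r * a | p r. p \<in> P}"
    have iPa: "is_ideal Pa" unfolding Pa_def is_ideal_def
    proof (intro conjI ballI allI)
      show "0 \<in> {p + r * a | p r. p \<in> P}" using ideal_0[OF iP] by (intro CollectI exI[of _ 0] exI[of _ 0]) simp
    next
      fix u w assume "u \<in> {p + r * a | p r. p \<in> P}" "w \<in> {p + r * a | p r. p \<in> P}"
      then obtain p1 r1 p2 r2 where "u = p1 + r1 * a" "w = p2 + r2 * a" "p1 \<in> P" "p2 \<in> P" by blast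
      moreover have "u + w = (p1 + p2) + (r1 + r2) * a" using calculation by (simp add: algebra_simps)
      ultimately show "u + w \<in> {p + r * a | p r. p \<in> P}" using ideal_add[OF iP] by blast
    next
      fix s u assume "u \<in> {p + r * a | p r. p \<in> P}"
      then obtain p1 r1 where "u = p1 + r1 * a" "p1 \<in> P" by blast
      moreover have "s * u = s * p1 + (s * r1) * a" using calculation by (simp add: algebra_simps)
      ultimately show "s * u \<in> {p + r * a | p r. p \<in> P}" using ideal_lmult[OF iP] by blast
    qed
    have PsubPa: "P \<subseteq> Pa" unfolding Pa_def by (force intro: exI[of _ 0])
    have aPa: "a \<in> Pa" unfolding Pa_def using ideal_0[OF iP] by (intro CollectI exI[of _ 0] exI[of _ 1]) simp
    have "Pa \<noteq> P" using aPa aP by blast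
    then have "Pa \<notin> Phi" using Pmax PsubPa by blast
    have "\<not> (\<forall>F. finite F \<longrightarrow> F \<subseteq> Pa \<longrightarrow> infinite {k. F \<subseteq> Ms k})"
      using PhiI[OF iPa] PsubPa xP \<open>Pa \<notin> Phi\<close> by blast
    then obtain Fa where Fa: "finite Fa" "Fa \<subseteq> Pa" "finite {k. Fa \<subseteq> Ms k}" by blast
    have "\<forall>y\<in>Fa. \<exists>p. p \<in> P \<and> (\<exists>r. y = p + r * a)" using Fa(2) unfolding Pa_def by blast
    then obtain g where g: "\<And>y. y \<in> Fa \<Longrightarrow> g y \<in> P \<and> (\<exists>r. y = g y + r * a)" by metis
    define Fp where "Fp = g ` Fa"
    have "finite Fp" "Fp \<subseteq> P" unfolding Fp_def using Fa(1) g by auto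
    moreover have "{k. Fp \<subseteq> Ms k \<and> a \<in> Ms k} \<subseteq> {k. Fa \<subseteq> Ms k}"
    proof safe
      fix k y assume k: "Fp \<subseteq> Ms k" "a \<in> Ms k" and y: "y \<in> Fa"
      obtain r where "y = g y + r * a" using g[OF y] by blast
      moreover have "g y \<in> Ms k" using k(1) y unfolding Fp_def by blast
      ultimately show "y \<in> Ms k" using ideal_add[OF Msi(1) _ ideal_lmult[OF Msi(1) k(2)]] by metis
    qed
    then have "finite {k. Fp \<subseteq> Ms k \<and> a \<in> Ms k}" using Fa(3) finite_subset by blast
    ultimately show ?thesis by blast
  qed
  have primeP: "prime_ideal P" unfolding prime_ideal_def
  proof (intro conjI allI impI)
    show "is_ideal P" by (rule iP)
    show "P \<noteq> UNIV" using oneP by blast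
  next
    fix a b assume ab: "a * b \<in> P"
    show "a \<in> P \<or> b \<in> P"
    proof (rule ccontr)
      assume "\<not> (a \<in> P \<or> b \<in> P)"
      then have "a \<notin> P" "b \<notin> P" by auto
      obtain Fa where Fa: "finite Fa" "Fa \<subseteq> P" "finite {k. Fa \<subseteq> Ms k \<and> a \<in> Ms k}" using ext[OF \<open>a \<notin> P\<close>] by blast
      obtain Fb where Fb: "finite Fb" "Fb \<subseteq> P" "finite {k. Fb \<subseteq> Ms k \<and> b \<in> Ms k}" using ext[OF \<open>b \<notin> P\<close>] by blast
      define F' where "F' = Fa \<union> Fb \<union> {a * b}"
      have "finite F'" "F' \<subseteq> P" unfolding F'_def using Fa Fb ab by auto
      then have inf: "infinite {k. F' \<subseteq> Ms k}" by (rule infP)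
      have "{k. F' \<subseteq> Ms k} \<subseteq> {k. Fa \<subseteq> Ms k \<and> a \<in> Ms k} \<union> {k. Fb \<subseteq> Ms k \<and> b \<in> Ms k}"
      proof
        fix k assume "k \<in> {k. F' \<subseteq> Ms k}"
        then have "Fa \<subseteq> Ms k" "Fb \<subseteq> Ms k" "a * b \<in> Ms k" unfolding F'_def by auto
        then show "k \<in> {k. Fa \<subseteq> Ms k \<and> a \<in> Ms k} \<union> {k. Fb \<subseteq> Ms k \<and> b \<in> Ms k}"
          using prime_mult[OF Msi(2)] by blast
      qed
      then have "finite {k. F' \<subseteq> Ms k}" using Fa(3) Fb(3) finite_subset by (metis finite_Un)
      then show False using inf by simp
    qed
  qed
  have "maximal_ideal P" by (rule prime_maximal[OF AD primeP xP x(2)])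
  then have PM: "P \<in> MaxSpec" unfolding MaxSpec_def by simp
  have "openin Max_inverse {M \<in> MaxSpec. nu I M \<in> {nu I P}}" using level_open[OF cont] .
  moreover have "P \<in> {M \<in> MaxSpec. nu I M \<in> {nu I P}}" using PM by simp
  ultimately have "\<exists>F. finite F \<and> F \<subseteq> P \<and> {N \<in> MaxSpec. F \<subseteq> N} \<subseteq> {M \<in> MaxSpec. nu I M \<in> {nu I P}}"
    by (rule max_nbhd)
  then obtain F where F: "finite F" "F \<subseteq> P" "{N \<in> MaxSpec. F \<subseteq> N} \<subseteq> {M \<in> MaxSpec. nu I M \<in> {nu I P}}"
    by blast
  have "infinite {k. F \<subseteq> Ms k}" using infP[OF F(1,2)] .
  then obtain k where k: "k > nat (nu I P)" "F \<subseteq> Ms k" unfolding infinite_nat_iff_unbounded by blast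
  then have "Ms k \<in> {N \<in> MaxSpec. F \<subseteq> N}" using Ms(1) by blast
  then have "nu I (Ms k) = nu I P" using F(3) by blast
  moreover have "int k < nu I (Ms k)" by (rule Ms(2))
  moreover have "nu I P < int k" using k(1) by linarith
  ultimately show False by simp
qed

definition Jt :: "'a::idom set \<Rightarrow> nat \<Rightarrow> 'a set" where
  "Jt I t = {y. \<forall>M\<in>MaxSpec. int t \<le> nu I M \<longrightarrow> y \<in> M}"

lemma MaxSpec_ideal: "M \<in> MaxSpec \<Longrightarrow> is_ideal M" and MaxSpec_prime: "M \<in> MaxSpec \<Longrightarrow> prime_ideal M"
  unfolding MaxSpec_def using maximal_prime maximal_ideal_def by blast+

lemma J_ideal: "is_ideal (Jt I t)"
  unfolding is_ideal_def Jt_def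
  using MaxSpec_ideal ideal_0 ideal_add ideal_lmult by blast

lemma J_radical: "radical_ideal (Jt I t)"
  unfolding radical_ideal_def
proof (intro conjI allI impI)
  show "is_ideal (Jt I t)" by (rule J_ideal)
next
  fix y :: 'a and n :: nat assume "y ^ n \<in> Jt I t"
  then show "y \<in> Jt I t" unfolding Jt_def using MaxSpec_prime prime_pow by blast
qed

lemma J_x:
  assumes AD: "almost_Dedekind TYPE('a::idom)" and I: "is_ideal I" "I \<noteq> {0}"
    and x: "x \<in> I" "x \<noteq> (0::'a)" and t: "1 \<le> t"
  shows "x \<in> Jt I t"
  unfolding Jt_def
proof (intro CollectI ballI impI)
  fix M assume M: "M \<in> MaxSpec" "int t \<le> nu I M"
  then have "1 \<le> nu I M" using t by linarith
  then show "x \<in> M" using mem_of_nu_pos[OF AD I x M(1)] by blast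
qed

lemma J_nz:
  assumes AD: "almost_Dedekind TYPE('a::idom)" and I: "is_ideal I" "I \<noteq> {(0::'a)}" and t: "1 \<le> t"
  shows "Jt I t \<noteq> {0}"
proof -
  obtain x where x: "x \<in> I" "x \<noteq> 0" using I ideal_0 by blast
  then have "x \<in> Jt I t" using J_x[OF AD I x t] by blast
  then show ?thesis using x(2) by blast
qed

lemma J_mono: "s \<le> t \<Longrightarrow> Jt I s \<subseteq> Jt I t"
  unfolding Jt_def by force

lemma nu_J_hi:
  assumes AD: "almost_Dedekind TYPE('a::idom)" and I: "is_ideal I" "I \<noteq> {(0::'a)}" and t: "1 \<le> t"
    and M: "M \<in> MaxSpec" and le: "int t \<le> nu I M"
  shows "nu (Jt I t) M = 1"
proof -
  have mM: "maximal_ideal M" using M unfolding MaxSpec_def by simp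
  interpret adm M using AD mM by unfold_locales
  have JM: "Jt I t \<subseteq> M" using M le unfolding Jt_def by blast
  have iJ: "is_ideal (Jt I t)" by (rule J_ideal)
  have nzJ: "Jt I t \<noteq> {0}" by (rule J_nz[OF AD I t])
  obtain p where p: "p \<noteq> 0" "val M (Fract p 1) = 1" using unif by blast
  obtain x where x: "x \<in> I" "x \<noteq> 0" using I ideal_0 by blast
  have xJ: "x \<in> Jt I t" by (rule J_x[OF AD I x t])
  then have "x \<in> M" using JM by blast
  then have vx: "1 \<le> val M (Fract x 1)" using vpos x(2) by blast
  define n where "n = nat (val M (Fract x 1))"
  obtain m where nm: "n = Suc m" using vx unfolding n_def by (metis gr0_implies_Suc nat_0_iff not_le zero_less_nat_eq zero_less_one order_less_le_trans)
  have "val M (Fract (p ^ n) 1) = int n * val M (Fract p 1)" by (rule vpow[OF p(1)])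
  then have vpn: "val M (Fract (p ^ n) 1) = val M (Fract x 1)" using p(2) vx unfolding n_def by simp
  have pn0: "p ^ n \<noteq> 0" using p(1) by simp
  obtain a b where ab: "b \<notin> M" "p ^ n * b = x * a" using vdiv[OF x(2) pn0] vpn by auto
  have b0: "b \<noteq> 0" using ab(1) zero_in by blast
  have "(p * b) ^ n = (p ^ n * b) * b ^ m" unfolding nm by (simp add: power_mult_distrib mult_ac)
  also have "\<dots> = x * (a * b ^ m)" using ab(2) by (simp add: mult_ac)
  finally have "(p * b) ^ n \<in> Jt I t" using ideal_rmult[OF iJ xJ] by simp
  then have pbJ: "p * b \<in> Jt I t" using J_radical unfolding radical_ideal_def by blast
  have pb0: "p * b \<noteq> 0" using p(1) b0 by simp
  have nz2: "Fract p 1 \<noteq> 0" "Fract b 1 \<noteq> 0" using p(1) b0 fract1_eq0 by metis+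
  have "val M (Fract p 1 * Fract b 1) = val M (Fract p 1) + val M (Fract b 1)" by (rule vmult[OF nz2])
  then have "val M (Fract (p * b) 1) = 1" using p(2) vunit[OF ab(1)] by (simp only: fract1_mult)
  moreover have "nu (Jt I t) M \<le> val M (Fract (p * b) 1)" by (rule nu_le[OF iJ nzJ pbJ pb0])
  ultimately have le1: "nu (Jt I t) M \<le> 1" by simp
  obtain i where i: "i \<in> Jt I t" "i \<noteq> 0" "val M (Fract i 1) = nu (Jt I t) M" using nu_attain[OF iJ nzJ] by blast
  have "1 \<le> val M (Fract i 1)" using vpos[OF i(2)] i(1) JM by blast
  then show ?thesis using le1 i(3) by simp
qed

lemma nu_J_lo:
  assumes AD: "almost_Dedekind TYPE('a::idom)" and I: "is_ideal I" "I \<noteq> {(0::'a)}" and t: "1 \<le> t"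
    and cont: "continuous_ideal I"
    and M: "M \<in> MaxSpec" and lt: "nu I M < int t"
  shows "nu (Jt I t) M = 0"
proof -
  have mM: "maximal_ideal M" using M unfolding MaxSpec_def by simp
  interpret adm M using AD mM by unfold_locales
  have iJ: "is_ideal (Jt I t)" by (rule J_ideal)
  have nzJ: "Jt I t \<noteq> {0}" by (rule J_nz[OF AD I t])
  define S where "S = {N \<in> MaxSpec. nu I N \<in> {..<int t}}"
  have "openin Max_inverse S" unfolding S_def by (rule level_open[OF cont])
  moreover have "M \<in> S" unfolding S_def using M lt by simp
  ultimately have "\<exists>F. finite F \<and> F \<subseteq> M \<and> {N \<in> MaxSpec. F \<subseteq> N} \<subseteq> S" by (rule max_nbhd)
  then obtain F where F: "finite F" "F \<subseteq> M" "{N \<in> MaxSpec. F \<subseteq> N} \<subseteq> S" by blast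
  define n where "n = nat (nu I M)"
  have nuM0: "0 \<le> nu I M" by (rule nu_nonneg[OF I])
  have bex: "\<exists>b. b \<notin> M \<and> f ^ n * b \<in> I" if fF: "f \<in> F" for f
  proof -
    have "f ^ n = 0 \<or> nu I M \<le> val M (Fract (f ^ n) 1)"
    proof (cases "n = 0")
      case True
      have f1: "Fract (1::'a) 1 = 1" by (rule fract_self) (rule one_neq_zero)
      have "nu I M = 0" using True nuM0 unfolding n_def by simp
      then have "nu I M \<le> val M (Fract (f ^ n) 1)" using True by (simp only: power_0 f1 v1)
      then show ?thesis by blast
    next
      case False
      show ?thesis
      proof (cases "f = 0")
        case True then show ?thesis using False by simp
      next
        case f0: False
        have "f \<in> M" using fF F(2) by blast
        then have vf: "1 \<le> val M (Fract f 1)" using vpos f0 by blast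
        have "val M (Fract (f ^ n) 1) = int n * val M (Fract f 1)" by (rule vpow[OF f0])
        moreover have "int n * 1 \<le> int n * val M (Fract f 1)" using vf by (intro mult_left_mono) auto
        moreover have "int n = nu I M" using nuM0 unfolding n_def by simp
        ultimately show ?thesis by simp
      qed
    qed
    then show ?thesis by (rule nu_div[OF I])
  qed
  then obtain bf where bf: "\<And>f. f \<in> F \<Longrightarrow> bf f \<notin> M \<and> f ^ n * bf f \<in> I" by metis
  define r where "r = prod bf F"
  have rM: "r \<notin> M" unfolding r_def using prime_prod_notin[OF pM F(1)] bf by blast
  have rJ: "r \<in> Jt I t" unfolding Jt_def
  proof (intro CollectI ballI impI)
    fix N assume N: "N \<in> MaxSpec" "int t \<le> nu I N"
    then have "N \<notin> S" unfolding S_def by simp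
    then have "\<not> F \<subseteq> N" using F(3) N(1) by blast
    then obtain f where f: "f \<in> F" "f \<notin> N" by blast
    show "r \<in> N"
    proof (rule ccontr)
      assume rN: "r \<notin> N"
      have mN: "maximal_ideal N" using N unfolding MaxSpec_def by simp
      interpret N: adm N using AD mN by unfold_locales
      have "r = bf f * prod bf (F - {f})" unfolding r_def by (rule prod.remove[OF F(1) f(1)])
      then have e: "r * f ^ n = prod bf (F - {f}) * (f ^ n * bf f)" by (simp only: mult_ac)
      have "prod bf (F - {f}) * (f ^ n * bf f) \<in> I" using ideal_lmult[OF I(1)] bf[OF f(1)] by blast
      then have rfI: "r * f ^ n \<in> I" unfolding e .
      have fnN: "f ^ n \<notin> N" using f(2) prime_pow N.pM by blast
      then have rfN: "r * f ^ n \<notin> N" using rN prime_mult[OF N.pM] by blast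
      then have rf0: "r * f ^ n \<noteq> 0" using N.zero_in by metis
      have le: "nu I N \<le> val N (Fract (r * f ^ n) 1)" by (rule N.nu_le[OF I rfI rf0])
      have r0: "r \<noteq> 0" "f ^ n \<noteq> 0" using rf0 by auto
      have nz: "Fract r 1 \<noteq> 0" "Fract (f ^ n) 1 \<noteq> 0" using r0 fract1_eq0 by metis+
      have "val N (Fract r 1 * Fract (f ^ n) 1) = val N (Fract r 1) + val N (Fract (f ^ n) 1)" by (rule N.vmult[OF nz])
      then have "val N (Fract (r * f ^ n) 1) = 0" using N.vunit[OF rN] N.vunit[OF fnN] by (simp only: fract1_mult)
      then show False using le N(2) t by linarith
    qed
  qed
  have r0: "r \<noteq> 0" using rM zero_in by blast
  have "nu (Jt I t) M \<le> val M (Fract r 1)" by (rule nu_le[OF iJ nzJ rJ r0])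
  then have "nu (Jt I t) M \<le> 0" using vunit[OF rM] by simp
  moreover have "0 \<le> nu (Jt I t) M" by (rule nu_nonneg[OF iJ nzJ])
  ultimately show ?thesis by simp
qed

lemma J_cont:
  assumes AD: "almost_Dedekind TYPE('a::idom)" and I: "is_ideal I" "I \<noteq> {(0::'a)}" and t: "1 \<le> t"
    and cont: "continuous_ideal I"
  shows "continuous_ideal (Jt I t)"
proof -
  have "\<forall>c. openin Max_inverse {M \<in> topspace Max_inverse. nu (Jt I t) M = c}"
  proof
    fix c
    have eq: "{M \<in> topspace Max_inverse. nu (Jt I t) M = c} = {M \<in> MaxSpec. nu I M \<in> {v. (if int t \<le> v then 1 else 0) = c}}"
    proof (rule set_eqI)
      fix M
      show "M \<in> {M \<in> topspace Max_inverse. nu (Jt I t) M = c} \<longleftrightarrow> M \<in> {M \<in> MaxSpec. nu I M \<in> {v. (if int t \<le> v then 1 else 0) = c}}"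
      proof (cases "M \<in> MaxSpec")
        case True
        show ?thesis
        proof (cases "int t \<le> nu I M")
          case True
          then show ?thesis using nu_J_hi[OF AD I t \<open>M \<in> MaxSpec\<close>] topspace_Max \<open>M \<in> MaxSpec\<close> by auto
        next
          case False
          then have "nu I M < int t" by simp
          then show ?thesis using nu_J_lo[OF AD I t cont \<open>M \<in> MaxSpec\<close>] topspace_Max \<open>M \<in> MaxSpec\<close> False by auto
        qed
      next
        case False then show ?thesis using topspace_Max by auto
      qed
    qed
    have O: "openin Max_inverse {M \<in> MaxSpec. nu I M \<in> {v. (if int t \<le> v then 1 else 0) = c}}"
      by (rule level_open[OF cont])
    show "openin Max_inverse {M \<in> topspace Max_inverse. nu (Jt I t) M = c}"
      unfolding eq by (rule O)
  qed
  then show ?thesis unfolding continuous_ideal_def cont_discrete .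
qed

lemma sum_ind: "0 \<le> v \<Longrightarrow> sum_list (map (\<lambda>t. if int t \<le> v then 1 else 0) [1..<k+1]) = min v (int k)"
proof (induction k)
  case 0 then show ?case by simp
next
  case (Suc k)
  have "[1..<Suc k + 1] = [1..<k+1] @ [Suc k]" by simp
  then have "sum_list (map (\<lambda>t. if int t \<le> v then 1 else 0) [1..<Suc k+1])
      = sum_list (map (\<lambda>t. if int t \<le> v then 1 else 0) [1..<k+1]) + (if int (Suc k) \<le> v then 1 else 0)"
    by simp
  also have "\<dots> = min v (int k) + (if int (Suc k) \<le> v then 1 else 0)" using Suc by simp
  also have "\<dots> = min v (int (Suc k))" by auto
  finally show ?case .
qed

lemma i_ii:
  assumes AD: "almost_Dedekind TYPE('a::idom)" and I: "is_ideal I" "I \<noteq> {(0::'a)}"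
    and cont: "continuous_ideal I"
  shows "\<exists>Js. Js \<noteq> [] \<and> (\<forall>J\<in>set Js. is_ideal J \<and> J \<noteq> {0} \<and> radical_ideal J \<and> continuous_ideal J)
                     \<and> sorted_wrt (\<subseteq>) Js \<and> I = ideal_prod_list Js"
proof -
  obtain K where K: "\<forall>M\<in>MaxSpec. nu I M \<le> K" using nu_bounded[OF AD I cont] by blast
  define k where "k = max 1 (nat K)"
  define Js where "Js = map (Jt I) [1..<k+1]"
  have ne: "Js \<noteq> []" unfolding Js_def k_def by simp
  have props: "\<forall>J\<in>set Js. is_ideal J \<and> J \<noteq> {0} \<and> radical_ideal J \<and> continuous_ideal J"
  proof
    fix J assume "J \<in> set Js"
    then obtain t where t: "1 \<le> t" "J = Jt I t" unfolding Js_def by auto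
    show "is_ideal J \<and> J \<noteq> {0} \<and> radical_ideal J \<and> continuous_ideal J"
      using J_ideal J_nz[OF AD I t(1)] J_radical J_cont[OF AD I t(1) cont] t(2) by blast
  qed
  have sorted: "sorted_wrt (\<subseteq>) Js"
    unfolding Js_def sorted_wrt_map
    by (rule sorted_wrt_mono_rel[OF _ sorted_wrt_upt]) (simp add: J_mono)
  have "I = ideal_prod_list Js"
  proof (rule ideal_eq_nu[OF AD I prod_list_ideal prod_list_nz])
    show "\<forall>J\<in>set Js. is_ideal J \<and> J \<noteq> {0}" using props by blast
  next
    fix M :: "'a set" assume mM: "maximal_ideal M"
    then have M: "M \<in> MaxSpec" unfolding MaxSpec_def by simp
    interpret adm M using AD mM by unfold_locales
    have "nu (ideal_prod_list Js) M = sum_list (map (\<lambda>J. nu J M) Js)"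
      using nu_prod_list props by blast
    also have "\<dots> = sum_list (map (\<lambda>t. nu (Jt I t) M) [1..<k+1])" unfolding Js_def by (simp add: comp_def)
    also have "\<dots> = sum_list (map (\<lambda>t. if int t \<le> nu I M then 1 else 0) [1..<k+1])"
    proof (rule arg_cong[where f = sum_list], rule map_cong[OF refl])
      fix t assume "t \<in> set [1..<k+1]"
      then have "t \<in> {1..<k+1}" by (simp only: set_upt)
      then have t: "1 \<le> t" by simp
      show "nu (Jt I t) M = (if int t \<le> nu I M then 1 else 0)"
        using nu_J_hi[OF AD I t M] nu_J_lo[OF AD I t cont M] by auto
    qed
    also have "\<dots> = min (nu I M) (int k)" by (rule sum_ind[OF nu_nonneg[OF I]])
    also have "\<dots> = nu I M" using K M unfolding k_def by auto
    finally show "nu I M = nu (ideal_prod_list Js) M" by simp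
  qed
  then show ?thesis using ne props sorted by blast
qed

theorem proposition3p8:
  fixes I :: "'a::idom set"
  assumes "almost_Dedekind TYPE('a)"
    and "is_ideal I" and "I \<noteq> {0}"
  shows "(continuous_ideal I
           \<longleftrightarrow> (\<exists>Js. Js \<noteq> [] \<and> (\<forall>J\<in>set Js. is_ideal J \<and> J \<noteq> {0} \<and> radical_ideal J \<and> continuous_ideal J)
                     \<and> sorted_wrt (\<subseteq>) Js \<and> I = ideal_prod_list Js))
       \<and> (continuous_ideal I
           \<longleftrightarrow> (\<exists>Js. Js \<noteq> [] \<and> (\<forall>J\<in>set Js. is_ideal J \<and> J \<noteq> {0} \<and> radical_ideal J \<and> continuous_ideal J)
                     \<and> I = ideal_prod_list Js))"
proof -
  have A: "continuous_ideal I \<Longrightarrow> (\<exists>Js. Js \<noteq> [] \<and> (\<forall>J\<in>set Js. is_ideal J \<and> J \<noteq> {0} \<and> radical_ideal J \<and> continuous_ideal J)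
                     \<and> sorted_wrt (\<subseteq>) Js \<and> I = ideal_prod_list Js)"
    using i_ii[OF assms] by blast
  have B: "continuous_ideal I" if H: "\<exists>Js. Js \<noteq> [] \<and> (\<forall>J\<in>set Js. is_ideal J \<and> J \<noteq> {0} \<and> radical_ideal J \<and> continuous_ideal J)
                     \<and> I = ideal_prod_list Js"
  proof -
    obtain Js where Js: "\<forall>J\<in>set Js. is_ideal J \<and> J \<noteq> {0} \<and> radical_ideal J \<and> continuous_ideal J" "I = ideal_prod_list Js"
      using H by blast
    show ?thesis using iii_i[OF assms(1) Js(1)] Js(2) by simp
  qed
  show ?thesis using A B by blast
qed

end
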